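(* Let $\varphi:\mathbb{D}\to\mathbb{D}$ be an inner function with $\varphi(0)=p\neq0$, let $(r_n)$ be a sequence with $0<r_n<1$ and $r_n\to1$, and put $w_n=-\frac{p}{|p|}r_n$. Then, with $C_\varphi$ acting on $H^2(\mathbb{D})$, $$\lim_{n\to\infty}\frac{\|C_\varphi\kappa_{\alpha_p(w_n)}\|}{\|\kappa_{\alpha_p(w_n)}\|}=\sqrt{\frac{1+|p|}{1-|p|}}=\|C_\varphi\|\quad\text{and}\quad\lim_{n\to\infty}\frac{\|C_\varphi\kappa_{w_n}\|}{\|\kappa_{w_n}\|}=\sqrt{\frac{1-|p|}{1+|p|}}.$$
   Context: $\mathbb{D}$ is the open unit disc; $H^2(\mathbb{D})$ is the Hardy space of holomorphic $f(z)=\sum a_nz^n$ with $\|f\|^2=\sum|a_n|^2<\infty$; $\kappa_w(z)=\frac{1}{1-\overline{w}z}$ is its reproducing kernel at $w\in\mathbb{D}$. An inner function is a holomorphic self-map of $\mathbb{D}$ whose radial limits have modulus $1$ a.e. on the unit circle. $C_\varphi f=f\circ\varphi$, and $\alpha_p(z)=\frac{p-z}{1-\overline{p}z}$ for $p\in\mathbb{D}$. *)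

theory Defs
  imports "HOL-Complex_Analysis.Complex_Analysis"
begin

definition taylor_coeff :: "(complex \<Rightarrow> complex) \<Rightarrow> nat \<Rightarrow> complex" where
  "taylor_coeff f n = (deriv ^^ n) f 0 / of_nat (fact n)"

definition in_H2 :: "(complex \<Rightarrow> complex) \<Rightarrow> bool" where
  "in_H2 f \<longleftrightarrow> f holomorphic_on ball 0 1 \<and> summable (\<lambda>n. (norm (taylor_coeff f n))^2)"

definition H2_norm :: "(complex \<Rightarrow> complex) \<Rightarrow> real" where
  "H2_norm f = sqrt (\<Sum>n. (norm (taylor_coeff f n))^2)"

definition kernel :: "complex \<Rightarrow> complex \<Rightarrow> complex" where
  "kernel w z = 1 / (1 - cnj w * z)"

definition disc_aut :: "complex \<Rightarrow> complex \<Rightarrow> complex" where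
  "disc_aut p z = (p - z) / (1 - cnj p * z)"

definition comp_op :: "(complex \<Rightarrow> complex) \<Rightarrow> (complex \<Rightarrow> complex) \<Rightarrow> (complex \<Rightarrow> complex)" where
  "comp_op \<phi> f = f \<circ> \<phi>"

definition comp_op_norm :: "(complex \<Rightarrow> complex) \<Rightarrow> real" where
  "comp_op_norm \<phi> = Sup {H2_norm (comp_op \<phi> f) | f. in_H2 f \<and> H2_norm f \<le> 1}"

definition inner_function :: "(complex \<Rightarrow> complex) \<Rightarrow> bool" where
  "inner_function \<phi> \<longleftrightarrow> \<phi> holomorphic_on ball 0 1 \<and> \<phi> ` ball 0 1 \<subseteq> ball 0 1 \<and>
     (AE t in lborel. t \<in> {0..2*pi} \<longrightarrow>
        (\<exists>L. ((\<lambda>r. \<phi> (complex_of_real r * cis t)) \<longlongrightarrow> L) (at_left 1) \<and> norm L = 1))"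

end

theory Submission imports Defs "HOL-Real_Asymp.Real_Asymp" begin

lemma dct_circ:
  fixes F :: "nat \<Rightarrow> real \<Rightarrow> complex" and G :: "real \<Rightarrow> complex"
  assumes cF: "\<And>k. continuous_on {0..2*pi} (F k)" and cG: "continuous_on {0..2*pi} G"
    and bd: "\<And>k t. t \<in> {0..2*pi} \<Longrightarrow> norm (F k t) \<le> B"
    and lim: "AE t in lborel. t \<in> {0..2*pi} \<longrightarrow> (\<lambda>k. F k t) \<longlonglongrightarrow> G t"
  shows "(\<lambda>k. LINT t:{0..2*pi}|lborel. F k t) \<longlonglongrightarrow> (LINT t:{0..2*pi}|lborel. G t)"
  unfolding set_lebesgue_integral_def
proof (rule integral_dominated_convergence[where w="\<lambda>t. indicator {0..2*pi} t *\<^sub>R B"])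
  show "(\<lambda>x. indicator {0..2 * pi} x *\<^sub>R G x) \<in> borel_measurable lborel"
    using borel_integrable_compact[OF compact_Icc cG] by (rule borel_measurable_integrable)
  show "(\<lambda>x. indicator {0..2 * pi} x *\<^sub>R F i x) \<in> borel_measurable lborel" for i
    using borel_integrable_compact[OF compact_Icc cF] by (rule borel_measurable_integrable)
  show "integrable lborel (\<lambda>t. indicator {0..2 * pi} t *\<^sub>R B)"
    by (rule borel_integrable_compact) (auto intro: continuous_intros)
  show "AE x in lborel. (\<lambda>i. indicator {0..2 * pi} x *\<^sub>R F i x) \<longlonglongrightarrow> indicator {0..2 * pi} x *\<^sub>R G x"
    using lim by eventually_elim (auto simp: indicator_def)
  show "AE x in lborel. norm (indicator {0..2 * pi} x *\<^sub>R F i x) \<le> indicator {0..2 * pi} x *\<^sub>R B" for i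
    using bd by (auto simp: indicator_def)
qed

lemma lint_eq_integral:
  fixes f :: "real \<Rightarrow> complex"
  assumes "continuous_on {0..2*pi} f"
  shows "(LINT t:{0..2*pi}|lborel. f t) = integral {0..2*pi} f"
  by (rule set_borel_integral_eq_integral) (use assms in \<open>auto simp: set_integrable_def intro!: borel_integrable_compact\<close>)

lemma dct_circ':
  fixes F :: "nat \<Rightarrow> real \<Rightarrow> complex" and G :: "real \<Rightarrow> complex"
  assumes cF: "\<And>k. continuous_on {0..2*pi} (F k)" and cG: "continuous_on {0..2*pi} G"
    and bd: "\<And>k t. t \<in> {0..2*pi} \<Longrightarrow> norm (F k t) \<le> B"
    and lim: "AE t in lborel. t \<in> {0..2*pi} \<longrightarrow> (\<lambda>k. F k t) \<longlonglongrightarrow> G t"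
  shows "(\<lambda>k. integral {0..2*pi} (F k)) \<longlonglongrightarrow> integral {0..2*pi} G"
  using dct_circ[OF assms] lint_eq_integral[OF cG] lint_eq_integral[OF cF] by simp

lemma dct_circ_everywhere:
  fixes F :: "nat \<Rightarrow> real \<Rightarrow> complex" and G :: "real \<Rightarrow> complex"
  assumes cF: "\<And>k. continuous_on {0..2*pi} (F k)" and cG: "continuous_on {0..2*pi} G"
    and bd: "\<And>k t. t \<in> {0..2*pi} \<Longrightarrow> norm (F k t) \<le> B"
    and lim: "\<And>t. t \<in> {0..2*pi} \<Longrightarrow> (\<lambda>k. F k t) \<longlonglongrightarrow> G t"
  shows "(\<lambda>k. integral {0..2*pi} (F k)) \<longlonglongrightarrow> integral {0..2*pi} G"
  by (rule dct_circ'[OF cF cG bd]) (use lim in auto)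

lemma int_cis_aux:
  fixes k :: real assumes "k \<in> \<int>" "k \<noteq> 0"
  shows "((\<lambda>t. cis (k * t)) has_integral 0) {0..2*pi}"
proof -
  have d: "((\<lambda>t. cis (k*t) / (\<i> * of_real k)) has_vector_derivative cis (k*t)) (at t within {0..2*pi})" for t
  proof -
    have "((\<lambda>t. cis (k*t)) has_derivative (\<lambda>h. (k*h) *\<^sub>R (\<i> * cis (k*t)))) (at t within {0..2*pi})"
      by (auto intro!: derivative_eq_intros)
    then have "((\<lambda>t. cis (k*t) * inverse (\<i> * of_real k)) has_derivative (\<lambda>h. ((k*h) *\<^sub>R (\<i> * cis (k*t))) * inverse (\<i> * of_real k))) (at t within {0..2*pi})"
      by (rule has_derivative_mult_left)
    moreover have "(\<lambda>h. ((k*h) *\<^sub>R (\<i> * cis (k*t))) / (\<i> * of_real k)) = (\<lambda>h. h *\<^sub>R cis (k*t))"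
      using assms by (auto simp: scaleR_conv_of_real field_simps)
    ultimately show ?thesis by (simp add: has_vector_derivative_def divide_inverse)
  qed
  have "((\<lambda>t. cis (k * t)) has_integral (cis (k*(2*pi)) / (\<i> * of_real k) - cis (k*0) / (\<i> * of_real k))) {0..2*pi}"
    by (rule fundamental_theorem_of_calculus) (use d in auto)
  moreover have "cis (k*(2*pi)) = 1"
    using cis_multiple_2pi[OF assms(1)] by (simp add: mult.commute)
  ultimately show ?thesis by simp
qed

lemma int_cis:
  fixes k :: int
  shows "(LINT t:{0..2*pi}|lborel. cis (of_int k * t)) = (if k = 0 then 2*pi else 0)"
proof -
  have si: "set_integrable lborel {0..2*pi} (\<lambda>t. cis (of_int k * t))"
    unfolding set_integrable_def by (rule borel_integrable_compact) (auto intro!: continuous_intros)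
  have "(LINT t:{0..2*pi}|lborel. cis (of_int k * t)) = integral {0..2*pi} (\<lambda>t. cis (of_int k * t))"
    by (rule set_borel_integral_eq_integral[OF si])
  also have "\<dots> = (if k = 0 then 2*pi else 0)"
  proof (cases "k = 0")
    case True then show ?thesis by (simp add: scaleR_conv_of_real)
  next
    case False
    then show ?thesis using int_cis_aux[of "of_int k"] by (auto intro: integral_unique)
  qed
  finally show ?thesis .
qed


lemma int_cis_nat:
  fixes n :: nat
  shows "integral {0..2*pi} (\<lambda>t. cis (real n * t)) = (if n = 0 then 2*pi else 0)"
proof -
  have "integral {0..2*pi} (\<lambda>t. cis (real n * t)) = (LINT t:{0..2*pi}|lborel. cis (of_int (int n) * t))"
    by (subst lint_eq_integral) (auto intro!: continuous_intros)
  then show ?thesis using int_cis[of "int n"] by simp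
qed

lemma int_cis_diff:
  fixes n m :: nat
  shows "integral {0..2*pi} (\<lambda>t. cis ((real n - real m) * t)) = (if n = m then 2*pi else 0)"
proof -
  have "integral {0..2*pi} (\<lambda>t. cis ((real n - real m) * t)) = (LINT t:{0..2*pi}|lborel. cis (of_int (int n - int m) * t))"
    by (subst lint_eq_integral) (auto intro!: continuous_intros)
  then show ?thesis using int_cis[of "int n - int m"] by simp
qed

lemma ps_sums:
  fixes g :: "complex \<Rightarrow> complex"
  assumes "g holomorphic_on ball 0 1" "norm z < 1"
  shows "(\<lambda>n. taylor_coeff g n * z^n) sums g z"
  using holomorphic_power_series[OF assms(1), of z] assms(2) by (simp add: taylor_coeff_def)

lemma ps_abs:
  fixes g :: "complex \<Rightarrow> complex"
  assumes "g holomorphic_on ball 0 1" "0 \<le> r" "r < 1"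
  shows "summable (\<lambda>n. norm (taylor_coeff g n) * r^n)"
proof -
  have "summable (\<lambda>n. taylor_coeff g n * (of_real ((1+r)/2))^n)"
  proof -
    have "norm (complex_of_real ((1+r)/2)) < 1" using assms by (simp only: norm_of_real) simp
    from sums_summable[OF ps_sums[OF assms(1) this]] show ?thesis .
  qed
  moreover have "norm (complex_of_real r) < norm (complex_of_real ((1+r)/2))" using assms by (simp only: norm_of_real) simp
  ultimately have "summable (\<lambda>n. norm (taylor_coeff g n * (complex_of_real r)^n))" by (rule powser_insidea)
  then show ?thesis using assms by (simp add: norm_mult norm_power)
qed

lemma cis_pow: "(complex_of_real r * cis t)^n = complex_of_real (r^n) * cis (real n * t)"
  by (simp add: power_mult_distrib Complex.DeMoivre)

lemma cont_circ:
  assumes "continuous_on (ball 0 1) g" "0 \<le> r" "r < 1"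
  shows "continuous_on {0..2*pi} (\<lambda>t. g (of_real r * cis t))"
proof (rule continuous_on_compose2[OF assms(1)])
  show "continuous_on {0..2*pi} (\<lambda>t. complex_of_real r * cis t)" by (auto intro!: continuous_intros)
  show "(\<lambda>t. complex_of_real r * cis t) ` {0..2 * pi} \<subseteq> ball 0 1" using assms by (auto simp: norm_mult)
qed

lemma mean_value_circ:
  fixes g :: "complex \<Rightarrow> complex"
  assumes hol: "g holomorphic_on ball 0 1" and r: "0 \<le> r" "r < 1"
  shows "integral {0..2*pi} (\<lambda>t. g (of_real r * cis t)) = 2*pi * g 0"
proof -
  define a where "a = taylor_coeff g"
  define A where "A = (\<Sum>n. norm (a n) * r^n)"
  have sA: "summable (\<lambda>n. norm (a n) * r^n)" unfolding a_def by (rule ps_abs[OF hol r])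
  define F where "F N t = (\<Sum>n<Suc N. (a n * of_real (r^n)) * cis (real n * t))" for N t
  have Fe: "F N t = (\<Sum>n<Suc N. a n * (of_real r * cis t)^n)" for N t
    unfolding F_def cis_pow by (simp add: mult.assoc)
  have intF: "integral {0..2*pi} (F N) = 2*pi * a 0" for N
  proof -
    have "integral {0..2*pi} (F N) = (\<Sum>n<Suc N. (a n * of_real (r^n)) * integral {0..2*pi} (\<lambda>t. cis (real n * t)))"
      unfolding F_def
      by (subst integral_sum) (auto intro!: integrable_continuous_interval continuous_intros)
    also have "\<dots> = (\<Sum>n<Suc N. (a n * of_real (r^n)) * (if n = 0 then 2*pi else 0))"
      by (simp only: int_cis_nat)
    also have "\<dots> = 2*pi * a 0"
      by (subst sum.lessThan_Suc_shift) simp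
    finally show ?thesis .
  qed
  have cg: "continuous_on {0..2*pi} (\<lambda>t. g (of_real r * cis t))"
    by (rule cont_circ[OF holomorphic_on_imp_continuous_on[OF hol] r])
  have "(\<lambda>N. integral {0..2*pi} (F N)) \<longlonglongrightarrow> integral {0..2*pi} (\<lambda>t. g (of_real r * cis t))"
  proof (rule dct_circ_everywhere[where B=A])
    show "continuous_on {0..2*pi} (F k)" for k unfolding F_def by (auto intro!: continuous_intros)
    show "norm (F k t) \<le> A" for k t
    proof -
      have "norm (F k t) \<le> (\<Sum>n<Suc k. norm (a n) * r^n)"
        unfolding F_def by (rule order_trans[OF norm_sum]) (use r in \<open>simp add: norm_mult norm_power\<close>)
      also have "\<dots> \<le> A" unfolding A_def by (rule sum_le_suminf[OF sA]) (use r in auto)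
      finally show ?thesis .
    qed
    show "(\<lambda>k. F k t) \<longlonglongrightarrow> g (of_real r * cis t)" for t
    proof -
      have "(\<lambda>n. a n * (of_real r * cis t)^n) sums g (of_real r * cis t)"
        unfolding a_def by (rule ps_sums[OF hol]) (use r in \<open>simp add: norm_mult\<close>)
      then have "(\<lambda>N. \<Sum>n<N. a n * (of_real r * cis t)^n) \<longlonglongrightarrow> g (of_real r * cis t)"
        by (simp add: sums_def)
      then show ?thesis unfolding Fe by (rule LIMSEQ_Suc)
    qed
  qed (fact cg)
  then have "integral {0..2*pi} (\<lambda>t. g (of_real r * cis t)) = 2*pi * a 0"
    unfolding intF by (simp add: LIMSEQ_const_iff)
  then show ?thesis by (simp add: a_def taylor_coeff_def)
qed


lemma ps_circ:
  fixes g :: "complex \<Rightarrow> complex"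
  assumes hol: "g holomorphic_on ball 0 1" and r: "0 \<le> r" "r < 1"
  shows "(\<lambda>N. \<Sum>n<N. (taylor_coeff g n * of_real (r^n)) * cis (real n * t)) \<longlonglongrightarrow> g (of_real r * cis t)"
    and "norm (\<Sum>n<N. (taylor_coeff g n * of_real (r^n)) * cis (real n * t)) \<le> (\<Sum>n. norm (taylor_coeff g n) * r^n)"
    and "continuous_on {0..2*pi} (\<lambda>t. \<Sum>n<N. (taylor_coeff g n * of_real (r^n)) * cis (real n * t))"
proof -
  have sA: "summable (\<lambda>n. norm (taylor_coeff g n) * r^n)" by (rule ps_abs[OF hol r])
  have "(\<lambda>n. taylor_coeff g n * (of_real r * cis t)^n) sums g (of_real r * cis t)"
    by (rule ps_sums[OF hol]) (use r in \<open>simp add: norm_mult\<close>)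
  then show "(\<lambda>N. \<Sum>n<N. (taylor_coeff g n * of_real (r^n)) * cis (real n * t)) \<longlonglongrightarrow> g (of_real r * cis t)"
    by (simp add: sums_def cis_pow mult.assoc)
  have "norm (\<Sum>n<N. (taylor_coeff g n * of_real (r^n)) * cis (real n * t)) \<le> (\<Sum>n<N. norm (taylor_coeff g n) * r^n)"
    by (rule order_trans[OF norm_sum]) (use r in \<open>simp add: norm_mult norm_power\<close>)
  also have "\<dots> \<le> (\<Sum>n. norm (taylor_coeff g n) * r^n)" by (rule sum_le_suminf[OF sA]) (use r in auto)
  finally show "norm (\<Sum>n<N. (taylor_coeff g n * of_real (r^n)) * cis (real n * t)) \<le> (\<Sum>n. norm (taylor_coeff g n) * r^n)" .
  show "continuous_on {0..2*pi} (\<lambda>t. \<Sum>n<N. (taylor_coeff g n * of_real (r^n)) * cis (real n * t))"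
    by (auto intro!: continuous_intros)
qed

lemma parseval_circ:
  fixes g :: "complex \<Rightarrow> complex"
  assumes hol: "g holomorphic_on ball 0 1" and r: "0 \<le> r" "r < 1"
  shows "summable (\<lambda>n. norm (taylor_coeff g n)^2 * r^(2*n))"
    and "integral {0..2*pi} (\<lambda>t. g (of_real r * cis t) * cnj (g (of_real r * cis t)))
          = of_real (2*pi * (\<Sum>n. norm (taylor_coeff g n)^2 * r^(2*n)))"
proof -
  define a where "a = taylor_coeff g"
  define A where "A = (\<Sum>n. norm (a n) * r^n)"
  have sA: "summable (\<lambda>n. norm (a n) * r^n)" unfolding a_def by (rule ps_abs[OF hol r])
  have A0: "norm (a n) * r^n \<le> A" for n
  proof -
    have "norm (a n) * r^n \<le> (\<Sum>i<Suc n. norm (a i) * r^i)" by (rule member_le_sum) (use r in auto)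
    also have "\<dots> \<le> A" unfolding A_def by (rule sum_le_suminf[OF sA]) (use r in auto)
    finally show ?thesis .
  qed
  define S where "S N t = (\<Sum>n<N. (a n * of_real (r^n)) * cis (real n * t))" for N t
  have Slim: "(\<lambda>N. S N t) \<longlonglongrightarrow> g (of_real r * cis t)" for t
    unfolding S_def a_def by (rule ps_circ[OF hol r])
  have Sbd: "norm (S N t) \<le> A" for N t
    unfolding S_def a_def A_def by (rule ps_circ[OF hol r])
  have Scont: "continuous_on {0..2*pi} (S N)" for N
    unfolding S_def a_def by (rule ps_circ[OF hol r])
  have eqsq: "norm (a n)^2 * r^(2*n) = (norm (a n) * r^n)^2" for n
    by (simp add: power_mult_distrib power_mult[symmetric] mult.commute)
  show sm: "summable (\<lambda>n. norm (a n)^2 * r^(2*n))"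
  proof (rule summable_comparison_test[OF _ summable_mult[OF sA, of A]])
    show "\<exists>N. \<forall>n\<ge>N. norm (norm (a n)^2 * r^(2*n)) \<le> A * (norm (a n) * r^n)"
    proof (intro exI allI impI)
      fix n
      have "(norm (a n) * r^n)^2 \<le> A * (norm (a n) * r^n)"
        unfolding power2_eq_square by (rule mult_right_mono[OF A0]) (use r in auto)
      then show "norm (norm (a n)^2 * r^(2*n)) \<le> A * (norm (a n) * r^n)" using r by (simp add: eqsq)
    qed
  qed
  have prod: "S N t * cnj (S N t) = (\<Sum>n<N. \<Sum>m<N. (a n * of_real (r^n)) * cnj (a m * of_real (r^m)) * cis ((real n - real m) * t))" for N t
  proof -
    have "S N t * cnj (S N t) = (\<Sum>n<N. \<Sum>m<N. ((a n * of_real (r^n)) * cis (real n * t)) * cnj ((a m * of_real (r^m)) * cis (real m * t)))"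
      unfolding S_def cnj_sum by (rule sum_product)
    also have "\<dots> = (\<Sum>n<N. \<Sum>m<N. (a n * of_real (r^n)) * cnj (a m * of_real (r^m)) * cis ((real n - real m) * t))"
    proof (intro sum.cong refl)
      fix n m
      have "cis (real n * t) * cnj (cis (real m * t)) = cis ((real n - real m) * t)"
        by (simp add: cis_cnj cis_mult left_diff_distrib)
      then show "((a n * of_real (r^n)) * cis (real n * t)) * cnj ((a m * of_real (r^m)) * cis (real m * t)) = (a n * of_real (r^n)) * cnj (a m * of_real (r^m)) * cis ((real n - real m) * t)"
        by (metis (no_types, lifting) complex_cnj_mult mult.assoc mult.left_commute)
    qed
    finally show ?thesis .
  qed
  have intF: "integral {0..2*pi} (\<lambda>t. S N t * cnj (S N t)) = of_real (2*pi * (\<Sum>n<N. norm (a n)^2 * r^(2*n)))" for N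
  proof -
    have "integral {0..2*pi} (\<lambda>t. S N t * cnj (S N t)) = (\<Sum>n<N. \<Sum>m<N. (a n * of_real (r^n)) * cnj (a m * of_real (r^m)) * integral {0..2*pi} (\<lambda>t. cis ((real n - real m) * t)))"
      unfolding prod
      apply (subst integral_sum)
        apply (auto intro!: integrable_continuous_interval continuous_intros)[2]
      apply (intro sum.cong refl)
      apply (subst integral_sum)
        apply (auto intro!: integrable_continuous_interval continuous_intros)
      done
    also have "\<dots> = (\<Sum>n<N. \<Sum>m<N. (a n * of_real (r^n)) * cnj (a m * of_real (r^m)) * (if n = m then 2*pi else 0))"
      by (simp only: int_cis_diff)
    also have "\<dots> = (\<Sum>n<N. (a n * of_real (r^n)) * cnj (a n * of_real (r^n)) * (2*pi))"
      by (simp add: if_distrib cong: if_cong)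
    also have "\<dots> = (\<Sum>n<N. of_real (2*pi * (norm (a n)^2 * r^(2*n))))"
    proof (intro sum.cong refl)
      fix n
      have "(a n * of_real (r^n)) * cnj (a n * of_real (r^n)) = of_real ((norm (a n * of_real (r^n)))^2)"
        by (rule complex_norm_square[symmetric])
      also have "norm (a n * of_real (r^n)) = norm (a n) * r^n" using r by (simp add: norm_mult norm_power)
      finally have X: "(a n * of_real (r^n)) * cnj (a n * of_real (r^n)) = of_real ((norm (a n) * r^n)^2)" .
      show "(a n * of_real (r^n)) * cnj (a n * of_real (r^n)) * (2*pi) = of_real (2*pi * (norm (a n)^2 * r^(2*n)))"
        unfolding eqsq X by (simp add: mult.commute)
    qed
    also have "\<dots> = of_real (2*pi * (\<Sum>n<N. norm (a n)^2 * r^(2*n)))"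
      by (simp add: sum_distrib_left)
    finally show ?thesis .
  qed
  have "(\<lambda>N. integral {0..2*pi} (\<lambda>t. S N t * cnj (S N t))) \<longlonglongrightarrow> integral {0..2*pi} (\<lambda>t. g (of_real r * cis t) * cnj (g (of_real r * cis t)))"
  proof (rule dct_circ_everywhere[where B="A*A"])
    show "continuous_on {0..2*pi} (\<lambda>t. S k t * cnj (S k t))" for k
      using Scont[of k] by (auto intro!: continuous_intros)
    show "continuous_on {0..2*pi} (\<lambda>t. g (of_real r * cis t) * cnj (g (of_real r * cis t)))"
      using cont_circ[OF holomorphic_on_imp_continuous_on[OF hol] r] by (auto intro!: continuous_intros)
    show "norm (S k t * cnj (S k t)) \<le> A * A" for k t
      unfolding norm_mult complex_mod_cnj by (rule mult_mono[OF Sbd Sbd]) (auto intro: order_trans[OF norm_ge_zero Sbd])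
    show "(\<lambda>k. S k t * cnj (S k t)) \<longlonglongrightarrow> g (of_real r * cis t) * cnj (g (of_real r * cis t))" for t
      by (intro tendsto_intros Slim)
  qed
  moreover have "(\<lambda>N. integral {0..2*pi} (\<lambda>t. S N t * cnj (S N t))) \<longlonglongrightarrow> of_real (2*pi * (\<Sum>n. norm (a n)^2 * r^(2*n)))"
    unfolding intF by (intro tendsto_intros summable_LIMSEQ sm)
  ultimately show "integral {0..2*pi} (\<lambda>t. g (of_real r * cis t) * cnj (g (of_real r * cis t)))
          = of_real (2*pi * (\<Sum>n. norm (taylor_coeff g n)^2 * r^(2*n)))"
    unfolding a_def by (rule LIMSEQ_unique)
qed


lemma abel_nonneg:
  fixes c :: "nat \<Rightarrow> real" and s :: "nat \<Rightarrow> real"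
  assumes c0: "\<And>n. 0 \<le> c n" and sc: "summable c" and s: "\<And>k. 0 \<le> s k \<and> s k \<le> 1" and sl: "s \<longlonglongrightarrow> 1"
  shows "(\<lambda>k. \<Sum>n. c n * s k ^ (2*n)) \<longlonglongrightarrow> (\<Sum>n. c n)"
proof -
  have ul: "uniform_limit {0..1} (\<lambda>N x. \<Sum>i<N. c i * x^(2*i)) (\<lambda>x. \<Sum>i. c i * x^(2*i)) sequentially"
  proof (rule Weierstrass_m_test[where M=c])
    show "norm (c n * x^(2*n)) \<le> c n" if "x \<in> {0..1}" for n x
      using that c0[of n] by (auto simp: abs_mult intro!: mult_left_le power_le_one)
  qed (fact sc)
  have cont: "continuous_on {0..1} (\<lambda>x. \<Sum>i. c i * x^(2*i))"
    by (rule uniform_limit_theorem[OF _ ul]) (auto intro!: always_eventually continuous_intros)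
  have "(\<lambda>k. \<Sum>i. c i * (s k)^(2*i)) \<longlonglongrightarrow> (\<Sum>i. c i * 1^(2*i))"
    by (rule continuous_on_tendsto_compose[OF cont sl]) (use s in auto)
  then show ?thesis by simp
qed

lemma bounded_H2:
  fixes g :: "complex \<Rightarrow> complex"
  assumes hol: "g holomorphic_on ball 0 1" and bd: "\<And>z. z \<in> ball 0 1 \<Longrightarrow> norm (g z) \<le> B"
    and s: "\<And>k. 0 < s k \<and> s k < 1" and sl: "s \<longlonglongrightarrow> 1"
  shows "in_H2 g"
    and "(\<lambda>k. integral {0..2*pi} (\<lambda>t. g (of_real (s k) * cis t) * cnj (g (of_real (s k) * cis t))))
           \<longlonglongrightarrow> of_real (2*pi * (H2_norm g)^2)"
proof -
  define c where "c n = norm (taylor_coeff g n)^2" for n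
  have c0: "0 \<le> c n" for n unfolding c_def by simp
  have le: "(\<Sum>n. c n * r^(2*n)) \<le> B^2" if r: "0 \<le> r" "r < 1" for r
  proof -
    have "2*pi * (\<Sum>n. c n * r^(2*n)) = norm (complex_of_real (2*pi * (\<Sum>n. c n * r^(2*n))))"
    proof -
      have "0 \<le> (\<Sum>n. c n * r^(2*n))"
        using parseval_circ(1)[OF hol r] c0 r by (intro suminf_nonneg) (auto simp: c_def)
      then show ?thesis by (subst norm_of_real) simp
    qed
    also have "\<dots> = norm (integral {0..2*pi} (\<lambda>t. g (of_real r * cis t) * cnj (g (of_real r * cis t))))"
      unfolding c_def by (simp only: parseval_circ(2)[OF hol r])
    also have "\<dots> \<le> integral {0..2*pi} (\<lambda>t. B^2)"
    proof (rule integral_norm_bound_integral)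
      show "(\<lambda>t. g (of_real r * cis t) * cnj (g (of_real r * cis t))) integrable_on {0..2*pi}"
        using cont_circ[OF holomorphic_on_imp_continuous_on[OF hol] r]
        by (auto intro!: integrable_continuous_interval continuous_intros)
      show "(\<lambda>t. B^2) integrable_on {0..2*pi}" by (rule integrable_const_ivl)
      fix t
      have "norm (g (of_real r * cis t)) \<le> B" using r by (intro bd) (simp add: norm_mult)
      then show "norm (g (of_real r * cis t) * cnj (g (of_real r * cis t))) \<le> B^2"
        unfolding norm_mult complex_mod_cnj power2_eq_square by (intro mult_mono) (auto intro: order_trans[OF norm_ge_zero])
    qed
    also have "\<dots> = 2*pi * B^2" by simp
    finally show ?thesis by simp
  qed
  have sm: "summable c"
  proof (rule bounded_imp_summable[OF c0])
    fix N
    have "(\<lambda>k. \<Sum>n\<le>N. c n * s k ^(2*n)) \<longlonglongrightarrow> (\<Sum>n\<le>N. c n * 1 ^(2*n))"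
      by (intro tendsto_intros sl)
    moreover have "(\<Sum>n\<le>N. c n * s k ^(2*n)) \<le> B^2" for k
    proof -
      have "(\<Sum>n\<le>N. c n * s k ^(2*n)) = (\<Sum>n<Suc N. c n * s k ^(2*n))" by (simp add: lessThan_Suc_atMost)
      also have "\<dots> \<le> (\<Sum>n. c n * s k ^(2*n))"
        using parseval_circ(1)[OF hol, of "s k"] s[of k]
        by (intro sum_le_suminf) (auto simp: c_def c0)
      also have "\<dots> \<le> B^2" using s[of k] by (intro le) auto
      finally show ?thesis .
    qed
    ultimately have "(\<Sum>n\<le>N. c n * 1 ^(2*n)) \<le> B^2" by (intro LIMSEQ_le_const2) auto
    then show "(\<Sum>n\<le>N. c n) \<le> B^2" by simp
  qed
  then show "in_H2 g" using hol unfolding in_H2_def c_def by simp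
  have "(H2_norm g)^2 = (\<Sum>n. c n)"
    unfolding H2_norm_def c_def using suminf_nonneg[OF sm c0] by (simp add: c_def)
  moreover have "(\<lambda>k. \<Sum>n. c n * s k ^ (2*n)) \<longlonglongrightarrow> (\<Sum>n. c n)"
    by (rule abel_nonneg[OF c0 sm _ sl]) (use s in \<open>auto simp: less_imp_le\<close>)
  ultimately have "(\<lambda>k. complex_of_real (2*pi * (\<Sum>n. c n * s k ^ (2*n)))) \<longlonglongrightarrow> complex_of_real (2*pi * (H2_norm g)^2)"
    by (auto intro!: tendsto_intros)
  moreover have "integral {0..2*pi} (\<lambda>t. g (of_real (s k) * cis t) * cnj (g (of_real (s k) * cis t))) = of_real (2*pi * (\<Sum>n. c n * s k ^ (2*n)))" for k
    unfolding c_def using s[of k] by (intro parseval_circ(2)[OF hol]) auto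
  ultimately show "(\<lambda>k. integral {0..2*pi} (\<lambda>t. g (of_real (s k) * cis t) * cnj (g (of_real (s k) * cis t))))
           \<longlonglongrightarrow> of_real (2*pi * (H2_norm g)^2)" by simp
qed


lemma inner_cont_circ:
  fixes \<phi> :: "complex \<Rightarrow> complex" and D :: "complex \<Rightarrow> complex"
  assumes inn: "inner_function \<phi>" and Dc: "continuous_on (cball 0 1) D" and r: "0 \<le> r" "r < 1"
  shows "continuous_on {0..2*pi} (\<lambda>t. D (\<phi> (of_real r * cis t)))"
proof -
  have ph: "\<phi> holomorphic_on ball 0 1" "\<phi> ` ball 0 1 \<subseteq> ball 0 1" using inn by (auto simp: inner_function_def)
  have "continuous_on (ball 0 1) (\<lambda>z. D (\<phi> z))"
    by (rule continuous_on_compose2[OF Dc holomorphic_on_imp_continuous_on[OF ph(1)]]) (use ph(2) in auto)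
  then show ?thesis by (rule cont_circ[OF _ r])
qed

lemma boundary_vanish:
  fixes \<phi> :: "complex \<Rightarrow> complex" and D :: "complex \<Rightarrow> complex"
  assumes inn: "inner_function \<phi>" and Dc: "continuous_on (cball 0 1) D" and D1: "\<And>u. norm u = 1 \<Longrightarrow> D u = 0"
    and s: "\<And>k. 0 < s k \<and> s k < 1" and sl: "s \<longlonglongrightarrow> 1"
  shows "(\<lambda>k. integral {0..2*pi} (\<lambda>t. D (\<phi> (of_real (s k) * cis t)))) \<longlonglongrightarrow> 0"
proof -
  have ph: "\<phi> holomorphic_on ball 0 1" "\<phi> ` ball 0 1 \<subseteq> ball 0 1"
    and ae: "AE t in lborel. t \<in> {0..2*pi} \<longrightarrow>
        (\<exists>L. ((\<lambda>r. \<phi> (complex_of_real r * cis t)) \<longlongrightarrow> L) (at_left 1) \<and> norm L = 1)"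
    using inn by (auto simp: inner_function_def)
  have "bounded (D ` cball 0 1)" by (rule compact_imp_bounded[OF compact_continuous_image[OF Dc compact_cball]])
  then obtain M where M: "\<And>u. u \<in> cball 0 1 \<Longrightarrow> norm (D u) \<le> M" unfolding bounded_iff by blast
  have sf: "filterlim s (at_left 1) sequentially"
    by (rule tendsto_imp_filterlim_at_left[OF sl]) (use s in auto)
  have "(\<lambda>k. integral {0..2*pi} (\<lambda>t. D (\<phi> (of_real (s k) * cis t)))) \<longlonglongrightarrow> integral {0..2*pi} (\<lambda>t. 0)"
  proof (rule dct_circ'[where B=M])
    show "continuous_on {0..2*pi} (\<lambda>t. D (\<phi> (of_real (s k) * cis t)))" for k
      using s[of k] by (intro inner_cont_circ[OF inn Dc]) auto
    show "continuous_on {0..2*pi} (\<lambda>t. 0::complex)" by simp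
    show "norm (D (\<phi> (of_real (s k) * cis t))) \<le> M" for k t
    proof (rule M)
      have "of_real (s k) * cis t \<in> ball 0 1" using s[of k] by (simp add: norm_mult)
      then have "\<phi> (of_real (s k) * cis t) \<in> ball 0 1" using ph(2) by blast
      then show "\<phi> (of_real (s k) * cis t) \<in> cball 0 1" by simp
    qed
    show "AE t in lborel. t \<in> {0..2*pi} \<longrightarrow> (\<lambda>k. D (\<phi> (of_real (s k) * cis t))) \<longlonglongrightarrow> 0"
      using ae
    proof eventually_elim
      case (elim t)
      show ?case
      proof
        assume "t \<in> {0..2*pi}"
        with elim obtain L where L: "((\<lambda>r. \<phi> (complex_of_real r * cis t)) \<longlongrightarrow> L) (at_left 1)" "norm L = 1"
          by auto
        have lim: "(\<lambda>k. \<phi> (complex_of_real (s k) * cis t)) \<longlonglongrightarrow> L"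
          using filterlim_compose[OF L(1) sf] by simp
        have "(\<lambda>k. D (\<phi> (complex_of_real (s k) * cis t))) \<longlonglongrightarrow> D L"
        proof (rule continuous_on_tendsto_compose[OF Dc lim])
          show "L \<in> cball 0 1" using L(2) by simp
          show "\<forall>\<^sub>F k in sequentially. \<phi> (complex_of_real (s k) * cis t) \<in> cball 0 1"
          proof (intro always_eventually allI)
            fix k
            have "of_real (s k) * cis t \<in> ball 0 1" using s[of k] by (simp add: norm_mult)
            then have "\<phi> (of_real (s k) * cis t) \<in> ball 0 1" using ph(2) by blast
      then show "\<phi> (of_real (s k) * cis t) \<in> cball 0 1" by simp
          qed
        qed
        then show "(\<lambda>k. D (\<phi> (of_real (s k) * cis t))) \<longlonglongrightarrow> 0" using D1[OF L(2)] by simp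
      qed
    qed
  qed
  then show ?thesis by simp
qed

lemma inner_id: "inner_function (\<lambda>z. z)"
  unfolding inner_function_def
proof (intro conjI)
  show "(\<lambda>z. z) holomorphic_on ball 0 1" by simp
  show "(\<lambda>z. z) ` ball 0 1 \<subseteq> ball 0 1" by simp
  show "AE t in lborel. t \<in> {0..2*pi} \<longrightarrow>
        (\<exists>L. ((\<lambda>r. complex_of_real r * cis t) \<longlongrightarrow> L) (at_left 1) \<and> norm L = 1)"
  proof (intro AE_I2 impI exI conjI)
    fix t :: real
    have "((\<lambda>r. complex_of_real r * cis t) \<longlongrightarrow> complex_of_real 1 * cis t) (at_left 1)"
      by (intro tendsto_intros)
    then show "((\<lambda>r. complex_of_real r * cis t) \<longlongrightarrow> cis t) (at_left 1)" by simp
    show "norm (cis t) = 1" by simp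
  qed
qed


definition sseq :: "nat \<Rightarrow> real" where "sseq k = 1 - 1 / (real k + 2)"

lemma sseq: "0 < sseq k" "sseq k < 1" "sseq \<longlonglongrightarrow> 1"
proof -
  show "0 < sseq k" "sseq k < 1" unfolding sseq_def by (auto simp: field_simps)
  have "(\<lambda>k. 1 / (real k + 2)) \<longlonglongrightarrow> 0"
    by real_asymp
  then have "(\<lambda>k. 1 - 1 / (real k + 2)) \<longlonglongrightarrow> 1 - 0" by (intro tendsto_intros)
  then show "sseq \<longlonglongrightarrow> 1" unfolding sseq_def[abs_def] by simp
qed

lemma boundary_norm:
  fixes \<phi> g Q T :: "complex \<Rightarrow> complex"
  assumes inn: "inner_function \<phi>"
    and hol: "g holomorphic_on ball 0 1" and bd: "\<And>z. z \<in> ball 0 1 \<Longrightarrow> norm (g z) \<le> B"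
    and Qc: "continuous_on (cball 0 1) Q" and Tc: "continuous_on (cball 0 1) T"
    and gQ: "\<And>z. z \<in> ball 0 1 \<Longrightarrow> g z * cnj (g z) = Q (\<phi> z)"
    and QT: "\<And>u. norm u = 1 \<Longrightarrow> Q u = T u"
    and intT: "\<And>r. 0 < r \<Longrightarrow> r < 1 \<Longrightarrow> integral {0..2*pi} (\<lambda>t. T (\<phi> (of_real r * cis t))) = c"
  shows "in_H2 g" "complex_of_real (2*pi*(H2_norm g)^2) = c"
proof -
  note s = sseq(1,2) sseq(3)
  have s': "\<And>k. 0 < sseq k \<and> sseq k < 1" using s by auto
  show "in_H2 g" by (rule bounded_H2(1)[OF hol bd s' s(3)])
  have lim1: "(\<lambda>k. integral {0..2*pi} (\<lambda>t. g (of_real (sseq k) * cis t) * cnj (g (of_real (sseq k) * cis t))))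
           \<longlonglongrightarrow> of_real (2*pi * (H2_norm g)^2)" by (rule bounded_H2(2)[OF hol bd s' s(3)])
  have lim0: "(\<lambda>k. integral {0..2*pi} (\<lambda>t. (\<lambda>u. Q u - T u) (\<phi> (of_real (sseq k) * cis t)))) \<longlonglongrightarrow> 0"
    by (rule boundary_vanish[OF inn _ _ s' s(3)]) (use QT Qc Tc in \<open>auto intro!: continuous_intros\<close>)
  have eq: "integral {0..2*pi} (\<lambda>t. g (of_real (sseq k) * cis t) * cnj (g (of_real (sseq k) * cis t)))
      = c + integral {0..2*pi} (\<lambda>t. (\<lambda>u. Q u - T u) (\<phi> (of_real (sseq k) * cis t)))" for k
  proof -
    have r: "0 \<le> sseq k" "sseq k < 1" using sseq(1,2)[of k] by auto
    have "integral {0..2*pi} (\<lambda>t. g (of_real (sseq k) * cis t) * cnj (g (of_real (sseq k) * cis t)))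
        = integral {0..2*pi} (\<lambda>t. T (\<phi> (of_real (sseq k) * cis t)) + (Q (\<phi> (of_real (sseq k) * cis t)) - T (\<phi> (of_real (sseq k) * cis t))))"
    proof (intro integral_cong)
      fix t
      have "of_real (sseq k) * cis t \<in> ball 0 1" using r by (simp add: norm_mult)
      then show "g (of_real (sseq k) * cis t) * cnj (g (of_real (sseq k) * cis t)) = T (\<phi> (of_real (sseq k) * cis t)) + (Q (\<phi> (of_real (sseq k) * cis t)) - T (\<phi> (of_real (sseq k) * cis t)))"
        using gQ by simp
    qed
    also have "\<dots> = integral {0..2*pi} (\<lambda>t. T (\<phi> (of_real (sseq k) * cis t))) + integral {0..2*pi} (\<lambda>t. (\<lambda>u. Q u - T u) (\<phi> (of_real (sseq k) * cis t)))"
      by (intro integral_add integrable_continuous_interval inner_cont_circ[OF inn _ r])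
         (use Qc Tc in \<open>auto intro!: continuous_intros\<close>)
    also have "integral {0..2*pi} (\<lambda>t. T (\<phi> (of_real (sseq k) * cis t))) = c" using sseq(1,2)[of k] by (intro intT) auto
    finally show ?thesis .
  qed
  have "(\<lambda>k. integral {0..2*pi} (\<lambda>t. g (of_real (sseq k) * cis t) * cnj (g (of_real (sseq k) * cis t)))) \<longlonglongrightarrow> c + 0"
    unfolding eq by (intro tendsto_intros lim0)
  with lim1 show "complex_of_real (2*pi*(H2_norm g)^2) = c" using LIMSEQ_unique by fastforce
qed


lemma cayley_re:
  fixes a :: complex assumes "a \<noteq> 1"
  shows "(1 + a) / (1 - a) + cnj ((1 + a) / (1 - a)) = 2 * (1 - a * cnj a) / ((1 - a) * cnj (1 - a))"
proof -
  have a1: "1 - a \<noteq> 0" using assms by simp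
  have a2: "1 - cnj a \<noteq> 0" using assms by (metis complex_cnj_cnj complex_cnj_one eq_iff_diff_eq_0)
  show ?thesis using a1 a2 by (simp add: field_simps)
qed

lemma kernel_comp:
  fixes \<phi> :: "complex \<Rightarrow> complex" and w :: complex
  assumes inn: "inner_function \<phi>" and w: "norm w < 1"
  shows "in_H2 (\<lambda>z. kernel w (\<phi> z))"
    and "(H2_norm (\<lambda>z. kernel w (\<phi> z)))^2
          = (1 - (norm w)^2 * (norm (\<phi> 0))^2) / ((1 - (norm w)^2) * (norm (1 - cnj w * \<phi> 0))^2)"
proof -
  have ph: "\<phi> holomorphic_on ball 0 1" "\<phi> ` ball 0 1 \<subseteq> ball 0 1" using inn by (auto simp: inner_function_def)
  have phb: "norm (\<phi> z) < 1" if "z \<in> ball 0 1" for z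
  proof -
    have "\<phi> z \<in> ball 0 1" using ph(2) that by blast
    then show ?thesis by simp
  qed
  have lower: "1 - norm w \<le> norm (1 - cnj w * u)" if "norm u \<le> 1" for u
  proof -
    have "norm (cnj w * u) \<le> norm w" using that by (simp add: norm_mult mult_left_le)
    moreover have "1 - norm (cnj w * u) \<le> norm (1 - cnj w * u)"
      by (metis norm_one norm_triangle_ineq2)
    ultimately show ?thesis by linarith
  qed
  have nz: "1 - cnj w * u \<noteq> 0" if "norm u \<le> 1" for u
    using lower[OF that] w by auto
  define g where "g z = kernel w (\<phi> z)" for z
  define G where "G u = (1 + cnj w * u) / (1 - cnj w * u)" for u
  define k0 where "k0 = 1 / (2 * (1 - complex_of_real ((norm w)^2)))"
  define Q where "Q u = kernel w u * cnj (kernel w u)" for u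
  define T where "T u = (G u + cnj (G u)) * k0" for u
  have w2: "(norm w)^2 < 1" using w by (simp add: power_less_one_iff abs_less_iff) 
  have w2': "1 - complex_of_real ((norm w)^2) \<noteq> 0"
  proof
    assume "1 - complex_of_real ((norm w)^2) = 0"
    then have "complex_of_real ((norm w)^2) = complex_of_real 1" by simp
    then have "(norm w)^2 = 1" using of_real_eq_iff by blast
    with w2 show False by simp
  qed
  have holg: "g holomorphic_on ball 0 1"
    unfolding g_def kernel_def
    by (intro holomorphic_intros ph(1)) (use nz phb in \<open>auto simp: less_imp_le\<close>)
  have bdg: "norm (g z) \<le> 1 / (1 - norm w)" if "z \<in> ball 0 1" for z
  proof -
    have l: "1 - norm w \<le> norm (1 - cnj w * \<phi> z)" using phb[OF that] by (intro lower) auto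
    have "norm (g z) = 1 / norm (1 - cnj w * \<phi> z)" by (simp add: g_def kernel_def norm_divide)
    also have "\<dots> \<le> 1 / (1 - norm w)" using l w by (intro divide_left_mono mult_pos_pos) auto
    finally show ?thesis .
  qed
  have Qc: "continuous_on (cball 0 1) Q"
    unfolding Q_def kernel_def by (intro continuous_intros) (use nz in auto)
  have Gc: "continuous_on (cball 0 1) G"
    unfolding G_def by (intro continuous_intros) (use nz in auto)
  have Tc: "continuous_on (cball 0 1) T"
    unfolding T_def using Gc by (intro continuous_intros) auto
  have gQ: "g z * cnj (g z) = Q (\<phi> z)" for z unfolding g_def Q_def by simp
  have Gre: "G u + cnj (G u) = 2 * (1 - (cnj w * u) * cnj (cnj w * u)) / ((1 - cnj w * u) * cnj (1 - cnj w * u))"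
    if "norm u \<le> 1" for u
    unfolding G_def by (rule cayley_re) (use nz[OF that] in auto)
  have QT: "Q u = T u" if "norm u = 1" for u
  proof -
    have aa: "(cnj w * u) * cnj (cnj w * u) = complex_of_real ((norm w)^2)"
    proof -
      have "(cnj w * u) * cnj (cnj w * u) = complex_of_real ((norm (cnj w * u))^2)"
        by (rule complex_norm_square[symmetric])
      also have "norm (cnj w * u) = norm w" using that by (simp add: norm_mult)
      finally show ?thesis .
    qed
    have n1: "1 - cnj w * u \<noteq> 0" using nz that by simp
    have n2: "cnj (1 - cnj w * u) \<noteq> 0" using n1 by (metis complex_cnj_zero_iff)
    have "T u = 2 * (1 - complex_of_real ((norm w)^2)) / ((1 - cnj w * u) * cnj (1 - cnj w * u)) * k0"
      unfolding T_def Gre[OF order.eq_iff[THEN iffD1, OF that, THEN conjunct1]] aa ..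
    also have "\<dots> = 1 / ((1 - cnj w * u) * cnj (1 - cnj w * u))"
      unfolding k0_def using w2' n1 n2 by (simp add: field_simps)
    also have "\<dots> = Q u" unfolding Q_def kernel_def by (simp add: field_simps)
    finally show ?thesis by simp
  qed
  have holG: "(\<lambda>z. G (\<phi> z)) holomorphic_on ball 0 1"
    unfolding G_def by (intro holomorphic_intros ph(1)) (use nz phb in \<open>auto simp: less_imp_le\<close>)
  have intT: "integral {0..2*pi} (\<lambda>t. T (\<phi> (of_real r * cis t))) = (2*pi * G (\<phi> 0) + cnj (2*pi * G (\<phi> 0))) * k0"
    if r: "0 < r" "r < 1" for r
  proof -
    have ig: "(\<lambda>t. G (\<phi> (of_real r * cis t))) integrable_on {0..2*pi}"
      using r by (intro integrable_continuous_interval cont_circ holomorphic_on_imp_continuous_on holG) auto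
    have mv: "integral {0..2*pi} (\<lambda>t. G (\<phi> (of_real r * cis t))) = 2*pi * G (\<phi> 0)"
      using mean_value_circ[OF holG, of r] r by simp
    have "integral {0..2*pi} (\<lambda>t. T (\<phi> (of_real r * cis t)))
       = (integral {0..2*pi} (\<lambda>t. G (\<phi> (of_real r * cis t))) + integral {0..2*pi} (\<lambda>t. cnj (G (\<phi> (of_real r * cis t))))) * k0"
      unfolding T_def by (simp add: integral_add ig integrable_on_cnj_iff)
    also have "\<dots> = (2*pi * G (\<phi> 0) + cnj (2*pi * G (\<phi> 0))) * k0"
      unfolding integral_cnj[symmetric] mv ..
    finally show ?thesis .
  qed
  note bn = boundary_norm[OF inn holg bdg Qc Tc gQ QT intT]
  show "in_H2 (\<lambda>z. kernel w (\<phi> z))" using bn(1) unfolding g_def .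
  define a where "a = cnj w * \<phi> 0"
  have a1: "norm (\<phi> 0) \<le> 1" using phb[of 0] by simp
  have na: "1 - a \<noteq> 0" unfolding a_def using nz[OF a1] .
  have aa: "a * cnj a = complex_of_real ((norm w)^2 * (norm (\<phi> 0))^2)"
    using complex_norm_square[of a] unfolding a_def by (simp add: norm_mult power_mult_distrib)
  have bb: "(1 - a) * cnj (1 - a) = complex_of_real ((norm (1 - a))^2)"
    using complex_norm_square[of "1 - a"] by simp
  have nb: "(norm (1 - a))^2 \<noteq> 0" using na by simp
  have w2'': "1 - (norm w)^2 \<noteq> 0" using w2 by simp
  define X where "X = (1 - (norm w)^2 * (norm (\<phi> 0))^2) / ((1 - (norm w)^2) * (norm (1 - a))^2)"
  have Gp: "G (\<phi> 0) + cnj (G (\<phi> 0)) = 2 * (1 - complex_of_real ((norm w)^2 * (norm (\<phi> 0))^2)) / complex_of_real ((norm (1 - a))^2)"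
    using Gre[OF a1] unfolding a_def[symmetric] aa bb .
  have "complex_of_real (2*pi*(H2_norm g)^2) = (2*pi * G (\<phi> 0) + cnj (2*pi * G (\<phi> 0))) * k0"
    by (rule bn(2))
  also have "\<dots> = 2*pi * (G (\<phi> 0) + cnj (G (\<phi> 0))) * k0" by (simp add: algebra_simps)
  also have "\<dots> = complex_of_real (2*pi*X)"
    unfolding Gp k0_def X_def using nb w2'' w2' by (simp add: field_simps)
  finally have "2*pi*(H2_norm g)^2 = 2*pi*X" using of_real_eq_iff by blast
  then have "(H2_norm g)^2 = X" using pi_gt_zero by (metis mult_cancel_left mult_eq_0_iff order_less_irrefl zero_neq_numeral)
  then show "(H2_norm (\<lambda>z. kernel w (\<phi> z)))^2
          = (1 - (norm w)^2 * (norm (\<phi> 0))^2) / ((1 - (norm w)^2) * (norm (1 - cnj w * \<phi> 0))^2)"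
    unfolding g_def[abs_def] X_def a_def .
qed


definition dd :: "real \<Rightarrow> nat \<Rightarrow> nat \<Rightarrow> real" where
  "dd q n m = q ^ (if m \<le> n then n - m else m - n)"

lemma dd_sym: "dd q n m = dd q m n"
  unfolding dd_def by auto

lemma geo_left:
  fixes q :: real assumes q: "0 \<le> q" "q < 1"
  shows "(\<Sum>m<n. q^(n-m)) \<le> q / (1 - q)"
proof (induction n)
  case 0 then show ?case using q by simp
next
  case (Suc n)
  have "(\<Sum>m<Suc n. q^(Suc n - m)) = q * (\<Sum>m<Suc n. q^(n - m))"
    by (simp add: sum_distrib_left Suc_diff_le distrib_left)
  also have "\<dots> = q * ((\<Sum>m<n. q^(n - m)) + 1)" by (simp only: sum.lessThan_Suc) (simp add: algebra_simps)
  also have "\<dots> \<le> q * (q / (1 - q) + 1)" using Suc q by (intro mult_left_mono) auto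
  also have "\<dots> = q / (1 - q)" using q by (simp add: field_simps)
  finally show ?case .
qed

lemma geo_right:
  fixes q :: real assumes q: "0 \<le> q" "q < 1"
  shows "(\<Sum>m\<in>{n..<K}. q^(m-n)) \<le> 1 / (1 - q)"
proof -
  have "(\<Sum>m\<in>{n..<K}. q^(m-n)) \<le> (\<Sum>m\<in>{n..<K+n}. q^(m-n))"
    by (rule sum_mono2) (use q in auto)
  also have "\<dots> = (\<Sum>j\<in>{0..<K}. q^j)"
    using sum.shift_bounds_nat_ivl[of "\<lambda>m. q^(m-n)" 0 n K] by (simp add: add.commute)
  also have "\<dots> = (1 - q^K) / (1 - q)" using q by (simp add: sum_gp_strict atLeast0LessThan)
  also have "\<dots> \<le> 1 / (1 - q)" using q by (intro divide_right_mono) auto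
  finally show ?thesis .
qed

lemma dd_row:
  fixes q :: real assumes q: "0 \<le> q" "q < 1"
  shows "(\<Sum>m<K. dd q n m) \<le> (1 + q) / (1 - q)"
proof -
  have split: "{..<K} = {m. m < K \<and> m < n} \<union> {n..<K}" by auto
  have "(\<Sum>m<K. dd q n m) = (\<Sum>m\<in>{m. m < K \<and> m < n}. dd q n m) + (\<Sum>m\<in>{n..<K}. dd q n m)"
    unfolding split by (rule sum.union_disjoint) auto
  also have "(\<Sum>m\<in>{m. m < K \<and> m < n}. dd q n m) = (\<Sum>m\<in>{m. m < K \<and> m < n}. q^(n-m))"
    by (intro sum.cong) (auto simp: dd_def)
  also have "\<dots> \<le> (\<Sum>m<n. q^(n-m))" by (rule sum_mono2) (use q in auto)
  also have "(\<Sum>m\<in>{n..<K}. dd q n m) = (\<Sum>m\<in>{n..<K}. q^(m-n))"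
    by (intro sum.cong) (auto simp: dd_def)
  finally have "(\<Sum>m<K. dd q n m) \<le> (\<Sum>m<n. q^(n-m)) + (\<Sum>m\<in>{n..<K}. q^(m-n))" by simp
  also have "\<dots> \<le> q / (1 - q) + 1 / (1 - q)" by (intro add_mono geo_left geo_right q)
  also have "\<dots> = (1 + q) / (1 - q)" by (simp add: add_divide_distrib)
  finally show ?thesis .
qed

lemma quad_bound:
  fixes q :: real and x :: "nat \<Rightarrow> real" assumes q: "0 \<le> q" "q < 1" and x: "\<And>n. 0 \<le> x n"
  shows "(\<Sum>n<K. \<Sum>m<K. x n * x m * dd q n m) \<le> (1 + q) / (1 - q) * (\<Sum>n<K. (x n)^2)"
proof -
  have d0: "0 \<le> dd q n m" for n m unfolding dd_def using q by simp
  have "(\<Sum>n<K. \<Sum>m<K. x n * x m * dd q n m) \<le> (\<Sum>n<K. \<Sum>m<K. (x n)^2/2 * dd q n m + (x m)^2/2 * dd q n m)"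
  proof (intro sum_mono)
    fix n m
    have "x n * x m \<le> (x n)^2/2 + (x m)^2/2"
      using sum_squares_bound[of "x n" "x m"] by (simp add: power2_eq_square field_simps)
    then have "x n * x m * dd q n m \<le> ((x n)^2/2 + (x m)^2/2) * dd q n m"
      by (rule mult_right_mono[OF _ d0])
    then show "x n * x m * dd q n m \<le> (x n)^2/2 * dd q n m + (x m)^2/2 * dd q n m"
      by (simp add: algebra_simps)
  qed
  also have "\<dots> = (\<Sum>n<K. \<Sum>m<K. (x n)^2/2 * dd q n m) + (\<Sum>n<K. \<Sum>m<K. (x m)^2/2 * dd q n m)"
    by (simp add: sum.distrib)
  also have "(\<Sum>n<K. \<Sum>m<K. (x m)^2/2 * dd q n m) = (\<Sum>n<K. \<Sum>m<K. (x n)^2/2 * dd q n m)"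
    by (subst sum.swap) (simp add: dd_sym)
  also have "(\<Sum>n<K. \<Sum>m<K. (x n)^2/2 * dd q n m) + (\<Sum>n<K. \<Sum>m<K. (x n)^2/2 * dd q n m)
      = (\<Sum>n<K. (x n)^2 * (\<Sum>m<K. dd q n m))"
  proof -
    have e: "(\<Sum>n<K. \<Sum>m<K. (x n)^2/2 * dd q n m) = (\<Sum>n<K. (x n)^2/2 * (\<Sum>m<K. dd q n m))"
      by (simp add: sum_distrib_left)
    show ?thesis unfolding e sum.distrib[symmetric] by (intro sum.cong) auto
  qed
  also have "\<dots> \<le> (\<Sum>n<K. (x n)^2 * ((1 + q) / (1 - q)))"
    by (intro sum_mono mult_left_mono dd_row q) auto
  also have "\<dots> = (1 + q) / (1 - q) * (\<Sum>n<K. (x n)^2)"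
    by (simp add: sum_distrib_left mult.commute)
  finally show ?thesis .
qed


definition ee :: "nat \<Rightarrow> nat \<Rightarrow> complex \<Rightarrow> complex" where
  "ee n m u = (if m \<le> n then u^(n-m) else cnj (u^(m-n)))"

lemma ee_circle:
  assumes "norm u = 1"
  shows "u^n * cnj (u^m) = ee n m u"
proof (cases "m \<le> n")
  case True
  have "u^m * cnj (u^m) = complex_of_real ((norm (u^m))^2)" by (rule complex_norm_square[symmetric])
  also have "\<dots> = 1" using assms by (simp add: norm_power)
  finally have 1: "u^m * cnj (u^m) = 1" .
  have "u^n = u^(n-m) * u^m" using True by (simp add: power_add[symmetric])
  then show ?thesis using True 1 by (simp add: ee_def mult.assoc)
next
  case False
  have "u^n * cnj (u^n) = complex_of_real ((norm (u^n))^2)" by (rule complex_norm_square[symmetric])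
  also have "\<dots> = 1" using assms by (simp add: norm_power)
  finally have 1: "u^n * cnj (u^n) = 1" .
  have "u^m = u^n * u^(m-n)" using False by (simp add: power_add[symmetric])
  then have "u^n * cnj (u^m) = (u^n * cnj (u^n)) * cnj (u^(m-n))" by (simp add: mult.assoc)
  also have "\<dots> = cnj (u^(m-n))" unfolding 1 by (rule mult_1_left)
  finally have calc: "u^n * cnj (u^m) = cnj (u^(m-n))" .
  have ee: "ee n m u = cnj (u^(m-n))" using False by (simp add: ee_def del: complex_cnj_power)
  show ?thesis unfolding ee by (rule calc)
qed

lemma poly_comp:
  fixes \<phi> :: "complex \<Rightarrow> complex" and a :: "nat \<Rightarrow> complex"
  assumes inn: "inner_function \<phi>"
  shows "in_H2 (\<lambda>z. \<Sum>n<K. a n * \<phi> z ^ n)"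
    and "(H2_norm (\<lambda>z. \<Sum>n<K. a n * \<phi> z ^ n))^2 \<le> (1 + norm (\<phi> 0)) / (1 - norm (\<phi> 0)) * (\<Sum>n<K. (norm (a n))^2)"
proof -
  have ph: "\<phi> holomorphic_on ball 0 1" "\<phi> ` ball 0 1 \<subseteq> ball 0 1" using inn by (auto simp: inner_function_def)
  have phb: "norm (\<phi> z) < 1" if "z \<in> ball 0 1" for z
  proof -
    have "\<phi> z \<in> ball 0 1" using ph(2) that by blast
    then show ?thesis by simp
  qed
  define p where "p = \<phi> 0"
  have p1: "norm p < 1" unfolding p_def by (rule phb) simp
  define g where "g z = (\<Sum>n<K. a n * \<phi> z ^ n)" for z
  define Q where "Q u = (\<Sum>n<K. a n * u ^ n) * cnj (\<Sum>n<K. a n * u ^ n)" for u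
  define T where "T u = (\<Sum>n<K. \<Sum>m<K. a n * cnj (a m) * ee n m u)" for u
  define c where "c = (\<Sum>n<K. \<Sum>m<K. a n * cnj (a m) * (if m \<le> n then 2*pi * p^(n-m) else cnj (2*pi * p^(m-n))))"
  have holg: "g holomorphic_on ball 0 1" unfolding g_def by (intro holomorphic_intros ph(1))
  have bdg: "norm (g z) \<le> (\<Sum>n<K. norm (a n))" if "z \<in> ball 0 1" for z
  proof -
    have "norm (g z) \<le> (\<Sum>n<K. norm (a n * \<phi> z ^ n))" unfolding g_def by (rule norm_sum)
    also have "\<dots> \<le> (\<Sum>n<K. norm (a n))"
    proof (intro sum_mono)
      fix n
      have "norm (\<phi> z ^ n) \<le> 1" using phb[OF that] by (simp add: norm_power power_le_one)
      then show "norm (a n * \<phi> z ^ n) \<le> norm (a n)" by (simp add: norm_mult mult_left_le)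
    qed
    finally show ?thesis .
  qed
  have Qc: "continuous_on (cball 0 1) Q" unfolding Q_def by (intro continuous_intros)
  have eec: "continuous_on S (ee n m)" for S n m
    unfolding ee_def by (cases "m \<le> n") (auto intro!: continuous_intros)
  have Tc: "continuous_on (cball 0 1) T" unfolding T_def
    by (intro continuous_on_sum continuous_on_mult continuous_on_const eec)
  have gQ: "g z * cnj (g z) = Q (\<phi> z)" for z unfolding g_def Q_def by simp
  have QT: "Q u = T u" if "norm u = 1" for u
  proof -
    have "Q u = (\<Sum>n<K. \<Sum>m<K. (a n * u ^ n) * cnj (a m * u ^ m))"
      unfolding Q_def cnj_sum by (rule sum_product)
    also have "\<dots> = T u" unfolding T_def
    proof (intro sum.cong refl)
      fix n m
      show "(a n * u ^ n) * cnj (a m * u ^ m) = a n * cnj (a m) * ee n m u"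
        using ee_circle[OF that, of n m] by (simp add: mult_ac)
    qed
    finally show ?thesis .
  qed
  have intT: "integral {0..2*pi} (\<lambda>t. T (\<phi> (of_real r * cis t))) = c" if r: "0 < r" "r < 1" for r
  proof -
    have mvj: "integral {0..2*pi} (\<lambda>t. \<phi> (of_real r * cis t) ^ j) = 2*pi * p^j" for j
      using mean_value_circ[of "\<lambda>z. \<phi> z ^ j" r] r ph(1) unfolding p_def by (auto intro!: holomorphic_intros)
    have intj: "(\<lambda>t. \<phi> (of_real r * cis t) ^ j) integrable_on {0..2*pi}" for j
      using r by (intro integrable_continuous_interval cont_circ continuous_intros
          holomorphic_on_imp_continuous_on ph(1)) auto
    have ie: "integral {0..2*pi} (\<lambda>t. ee n m (\<phi> (of_real r * cis t))) = (if m \<le> n then 2*pi * p^(n-m) else cnj (2*pi * p^(m-n)))" for n m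
      by (cases "m \<le> n") (simp_all add: ee_def mvj integral_cnj[symmetric] del: complex_cnj_power complex_cnj_mult)
    have iee: "(\<lambda>t. ee n m (\<phi> (of_real r * cis t))) integrable_on {0..2*pi}" for n m
      by (cases "m \<le> n") (simp_all add: ee_def intj integrable_on_cnj_iff del: complex_cnj_power)
    show ?thesis unfolding T_def c_def
      apply (subst integral_sum)
        apply (auto intro!: integrable_sum iee integrable_on_mult_right)[2]
      apply (intro sum.cong refl)
      apply (subst integral_sum)
        apply (auto intro!: iee integrable_on_mult_right simp: ie)
      done
  qed
  note bn = boundary_norm[OF inn holg bdg Qc Tc gQ QT intT]
  show "in_H2 (\<lambda>z. \<Sum>n<K. a n * \<phi> z ^ n)" using bn(1) unfolding g_def .
  have "2*pi*(H2_norm g)^2 \<le> norm c"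
  proof -
    have "2*pi*(H2_norm g)^2 \<le> norm (complex_of_real (2*pi*(H2_norm g)^2))" by (simp only: norm_of_real)
    then show ?thesis by (simp only: bn(2))
  qed
  also have "norm c \<le> (\<Sum>n<K. \<Sum>m<K. 2*pi * (norm (a n) * norm (a m) * dd (norm p) n m))"
    unfolding c_def
    by (rule order_trans[OF norm_sum], intro sum_mono, rule order_trans[OF norm_sum], intro sum_mono)
       (auto simp: norm_mult dd_def norm_power)
  also have "\<dots> = 2*pi * (\<Sum>n<K. \<Sum>m<K. norm (a n) * norm (a m) * dd (norm p) n m)"
    by (simp add: sum_distrib_left)
  also have "\<dots> \<le> 2*pi * ((1 + norm p) / (1 - norm p) * (\<Sum>n<K. (norm (a n))^2))"
    by (intro mult_left_mono quad_bound) (use p1 in auto)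
  finally have "2*pi*(H2_norm g)^2 \<le> 2*pi * ((1 + norm p) / (1 - norm p) * (\<Sum>n<K. (norm (a n))^2))" .
  then have "(H2_norm g)^2 \<le> (1 + norm p) / (1 - norm p) * (\<Sum>n<K. (norm (a n))^2)"
    by (rule mult_left_le_imp_le) simp
  then show "(H2_norm (\<lambda>z. \<Sum>n<K. a n * \<phi> z ^ n))^2 \<le> (1 + norm (\<phi> 0)) / (1 - norm (\<phi> 0)) * (\<Sum>n<K. (norm (a n))^2)"
    unfolding g_def[abs_def] p_def .
qed


lemma H2_norm_sq:
  assumes "summable (\<lambda>n. (norm (taylor_coeff f n))^2)"
  shows "(H2_norm f)^2 = (\<Sum>n. (norm (taylor_coeff f n))^2)"
  unfolding H2_norm_def using suminf_nonneg[OF assms] by simp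

lemma comp_bound_circle:
  fixes \<phi> f :: "complex \<Rightarrow> complex"
  assumes inn: "inner_function \<phi>" and f: "in_H2 f" and r: "0 < r" "r < 1"
  shows "(\<Sum>n. (norm (taylor_coeff (\<lambda>z. f (\<phi> z)) n))^2 * r^(2*n))
           \<le> (1 + norm (\<phi> 0)) / (1 - norm (\<phi> 0)) * (H2_norm f)^2"
proof -
  have ph: "\<phi> holomorphic_on ball 0 1" "\<phi> ` ball 0 1 \<subseteq> ball 0 1" using inn by (auto simp: inner_function_def)
  have phb: "norm (\<phi> z) < 1" if "z \<in> ball 0 1" for z
  proof -
    have "\<phi> z \<in> ball 0 1" using ph(2) that by blast
    then show ?thesis by simp
  qed
  have fh: "f holomorphic_on ball 0 1" and fs: "summable (\<lambda>n. (norm (taylor_coeff f n))^2)"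
    using f by (auto simp: in_H2_def)
  define C where "C = (1 + norm (\<phi> 0)) / (1 - norm (\<phi> 0))"
  have C0: "0 \<le> C" unfolding C_def using phb[of 0] by auto
  define a where "a = taylor_coeff f"
  define g where "g z = f (\<phi> z)" for z
  have holg: "g holomorphic_on ball 0 1" unfolding g_def
    by (rule holomorphic_on_compose_gen[OF ph(1) fh ph(2), unfolded o_def])
  have phc: "continuous_on (ball 0 1) \<phi>" by (rule holomorphic_on_imp_continuous_on[OF ph(1)])
  have fc: "continuous_on (ball 0 1) f" by (rule holomorphic_on_imp_continuous_on[OF fh])
  obtain z0 where z0: "z0 \<in> cball 0 r" "\<And>z. z \<in> cball 0 r \<Longrightarrow> norm (\<phi> z) \<le> norm (\<phi> z0)"
  proof -
    have "continuous_on (cball 0 r) (\<lambda>z. norm (\<phi> z))"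
      by (rule continuous_on_subset[OF continuous_on_norm[OF phc]]) (use r in auto)
    from compact_attains_sup[OF compact_continuous_image[OF this compact_cball]] r
    show ?thesis using that by auto
  qed
  define \<rho> where "\<rho> = norm (\<phi> z0)"
  have \<rho>1: "\<rho> < 1" unfolding \<rho>_def by (rule phb) (use z0(1) r in auto)
  have \<rho>0: "0 \<le> \<rho>" unfolding \<rho>_def by simp
  have inr: "norm (\<phi> (of_real r * cis t)) \<le> \<rho>" for t
    unfolding \<rho>_def by (rule z0(2)) (use r in \<open>simp add: norm_mult\<close>)
  define A where "A = (\<Sum>n. norm (a n) * \<rho>^n)"
  have sA: "summable (\<lambda>n. norm (a n) * \<rho>^n)" unfolding a_def by (rule ps_abs[OF fh \<rho>0 \<rho>1])
  define fK where "fK K u = (\<Sum>n<K. a n * u^n)" for K u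
  have fKbd: "norm (fK K u) \<le> A" if "norm u \<le> \<rho>" for K u
  proof -
    have "norm (fK K u) \<le> (\<Sum>n<K. norm (a n) * \<rho>^n)"
      unfolding fK_def
      by (rule order_trans[OF norm_sum], intro sum_mono)
         (use that in \<open>auto simp: norm_mult norm_power intro!: mult_left_mono power_mono\<close>)
    also have "\<dots> \<le> A" unfolding A_def by (rule sum_le_suminf[OF sA]) (use \<rho>0 in auto)
    finally show ?thesis .
  qed
  have fKlim: "(\<lambda>K. fK K u) \<longlonglongrightarrow> f u" if "norm u < 1" for u
    using ps_sums[OF fh that] unfolding fK_def a_def sums_def .
  define N2 where "N2 = (\<Sum>n. (norm (a n))^2)"
  have intK: "Re (integral {0..2*pi} (\<lambda>t. fK K (\<phi> (of_real r * cis t)) * cnj (fK K (\<phi> (of_real r * cis t))))) \<le> 2*pi * (C * N2)" for K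
  proof -
    define gK where "gK z = (\<Sum>n<K. a n * \<phi> z ^ n)" for z
    have holgK: "gK holomorphic_on ball 0 1" unfolding gK_def by (intro holomorphic_intros ph(1))
    have pc: "in_H2 gK" "(H2_norm gK)^2 \<le> C * (\<Sum>n<K. (norm (a n))^2)"
      unfolding gK_def[abs_def] C_def by (rule poly_comp[OF inn])+
    have sK: "summable (\<lambda>n. (norm (taylor_coeff gK n))^2)" using pc(1) by (simp add: in_H2_def)
    have "integral {0..2*pi} (\<lambda>t. fK K (\<phi> (of_real r * cis t)) * cnj (fK K (\<phi> (of_real r * cis t))))
        = of_real (2*pi * (\<Sum>n. norm (taylor_coeff gK n)^2 * r^(2*n)))"
      using parseval_circ(2)[OF holgK, of r] r unfolding gK_def fK_def by simp
    then have "Re (integral {0..2*pi} (\<lambda>t. fK K (\<phi> (of_real r * cis t)) * cnj (fK K (\<phi> (of_real r * cis t)))))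
        = 2*pi * (\<Sum>n. norm (taylor_coeff gK n)^2 * r^(2*n))" by simp
    also have "\<dots> \<le> 2*pi * (\<Sum>n. norm (taylor_coeff gK n)^2)"
      using parseval_circ(1)[OF holgK, of r] r sK
      by (intro mult_left_mono suminf_le) (auto intro!: mult_left_le power_le_one)
    also have "\<dots> = 2*pi * (H2_norm gK)^2" by (simp add: H2_norm_sq[OF sK])
    also have "\<dots> \<le> 2*pi * (C * (\<Sum>n<K. (norm (a n))^2))" using pc(2) by simp
    also have "\<dots> \<le> 2*pi * (C * N2)"
      unfolding N2_def using fs C0 unfolding a_def
      by (intro mult_left_mono sum_le_suminf) auto
    finally show ?thesis .
  qed
  have lim: "(\<lambda>K. integral {0..2*pi} (\<lambda>t. fK K (\<phi> (of_real r * cis t)) * cnj (fK K (\<phi> (of_real r * cis t)))))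
      \<longlonglongrightarrow> integral {0..2*pi} (\<lambda>t. g (of_real r * cis t) * cnj (g (of_real r * cis t)))"
  proof (rule dct_circ_everywhere[where B="A*A"])
    show "continuous_on {0..2*pi} (\<lambda>t. fK K (\<phi> (of_real r * cis t)) * cnj (fK K (\<phi> (of_real r * cis t))))" for K
    proof -
      have "continuous_on (ball 0 1) (\<lambda>z. fK K (\<phi> z) * cnj (fK K (\<phi> z)))"
        unfolding fK_def by (intro continuous_intros phc)
      then show ?thesis using r by (intro cont_circ[where g="\<lambda>z. fK K (\<phi> z) * cnj (fK K (\<phi> z))"]) auto
    qed
    show "continuous_on {0..2*pi} (\<lambda>t. g (of_real r * cis t) * cnj (g (of_real r * cis t)))"
      using r by (intro continuous_intros cont_circ holomorphic_on_imp_continuous_on holg) auto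
    show "norm (fK K (\<phi> (of_real r * cis t)) * cnj (fK K (\<phi> (of_real r * cis t)))) \<le> A * A" for K t
      unfolding norm_mult complex_mod_cnj
      by (intro mult_mono fKbd inr) (auto intro: order_trans[OF norm_ge_zero fKbd[OF inr]])
    show "(\<lambda>K. fK K (\<phi> (of_real r * cis t)) * cnj (fK K (\<phi> (of_real r * cis t)))) \<longlonglongrightarrow> g (of_real r * cis t) * cnj (g (of_real r * cis t))" for t
    proof -
      have "norm (\<phi> (of_real r * cis t)) < 1" using inr[of t] \<rho>1 by simp
      then show ?thesis unfolding g_def by (intro tendsto_intros fKlim)
    qed
  qed
  have "Re (integral {0..2*pi} (\<lambda>t. g (of_real r * cis t) * cnj (g (of_real r * cis t)))) \<le> 2*pi * (C * N2)"
    by (rule LIMSEQ_le_const2[OF tendsto_Re[OF lim]]) (use intK in auto)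
  moreover have "integral {0..2*pi} (\<lambda>t. g (of_real r * cis t) * cnj (g (of_real r * cis t)))
      = of_real (2*pi * (\<Sum>n. norm (taylor_coeff g n)^2 * r^(2*n)))"
    using parseval_circ(2)[OF holg, of r] r by simp
  ultimately have "2*pi * (\<Sum>n. norm (taylor_coeff g n)^2 * r^(2*n)) \<le> 2*pi * (C * N2)" by simp
  then have "(\<Sum>n. norm (taylor_coeff g n)^2 * r^(2*n)) \<le> C * N2"
    by (rule mult_left_le_imp_le) simp
  moreover have "N2 = (H2_norm f)^2" unfolding N2_def a_def by (rule H2_norm_sq[OF fs, symmetric])
  ultimately show ?thesis unfolding g_def[abs_def] C_def by simp
qed

lemma comp_bound:
  fixes \<phi> f :: "complex \<Rightarrow> complex"
  assumes inn: "inner_function \<phi>" and f: "in_H2 f"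
  shows "(H2_norm (comp_op \<phi> f))^2 \<le> (1 + norm (\<phi> 0)) / (1 - norm (\<phi> 0)) * (H2_norm f)^2"
proof -
  define M where "M = (1 + norm (\<phi> 0)) / (1 - norm (\<phi> 0)) * (H2_norm f)^2"
  define b where "b n = (norm (taylor_coeff (\<lambda>z. f (\<phi> z)) n))^2" for n
  have b0: "0 \<le> b n" for n unfolding b_def by simp
  have ph: "\<phi> holomorphic_on ball 0 1" "\<phi> ` ball 0 1 \<subseteq> ball 0 1" using inn by (auto simp: inner_function_def)
  have fh: "f holomorphic_on ball 0 1" using f by (auto simp: in_H2_def)
  have holg: "(\<lambda>z. f (\<phi> z)) holomorphic_on ball 0 1"
    by (rule holomorphic_on_compose_gen[OF ph(1) fh ph(2), unfolded o_def])
  have part: "(\<Sum>n<N. b n) \<le> M" for N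
  proof -
    have "(\<lambda>k. \<Sum>n<N. b n * sseq k ^ (2*n)) \<longlonglongrightarrow> (\<Sum>n<N. b n * 1 ^ (2*n))"
      by (intro tendsto_intros sseq(3))
    moreover have "(\<Sum>n<N. b n * sseq k ^ (2*n)) \<le> M" for k
    proof -
      have r: "0 < sseq k" "sseq k < 1" by (rule sseq)+
      have "(\<Sum>n<N. b n * sseq k ^ (2*n)) \<le> (\<Sum>n. b n * sseq k ^ (2*n))"
        using parseval_circ(1)[OF holg, of "sseq k"] r b0
        by (intro sum_le_suminf) (auto simp: b_def)
      also have "\<dots> \<le> M" unfolding b_def M_def by (rule comp_bound_circle[OF inn f r])
      finally show ?thesis .
    qed
    ultimately have "(\<Sum>n<N. b n * 1 ^ (2*n)) \<le> M" by (intro LIMSEQ_le_const2) auto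
    then show ?thesis by simp
  qed
  have sb: "summable b"
    by (rule bounded_imp_summable[OF b0, where B=M]) (metis part lessThan_Suc_atMost)
  have "(H2_norm (comp_op \<phi> f))^2 = (\<Sum>n. b n)"
    unfolding comp_op_def o_def b_def by (rule H2_norm_sq) (use sb in \<open>simp add: b_def[abs_def]\<close>)
  also have "\<dots> \<le> M" by (rule suminf_le_const[OF sb part])
  finally show ?thesis unfolding M_def .
qed


lemma H2_scale:
  fixes g :: "complex \<Rightarrow> complex"
  assumes g: "in_H2 g"
  shows "in_H2 (\<lambda>z. c * g z)" "H2_norm (\<lambda>z. c * g z) = norm c * H2_norm g"
proof -
  have hol: "g holomorphic_on ball 0 1" and sg: "summable (\<lambda>n. (norm (taylor_coeff g n))^2)"
    using g by (auto simp: in_H2_def)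
  have tc: "taylor_coeff (\<lambda>z. c * g z) n = c * taylor_coeff g n" for n
    unfolding taylor_coeff_def using higher_deriv_cmult[OF hol, of 0 n c] by simp
  have eq: "(norm (taylor_coeff (\<lambda>z. c * g z) n))^2 = (norm c)^2 * (norm (taylor_coeff g n))^2" for n
    unfolding tc by (simp add: norm_mult power_mult_distrib)
  have s2: "summable (\<lambda>n. (norm (taylor_coeff (\<lambda>z. c * g z) n))^2)"
    unfolding eq by (intro summable_mult sg)
  show "in_H2 (\<lambda>z. c * g z)" unfolding in_H2_def using s2 hol by (auto intro!: holomorphic_intros)
  have "H2_norm (\<lambda>z. c * g z) = sqrt ((norm c)^2 * (\<Sum>n. (norm (taylor_coeff g n))^2))"
    unfolding H2_norm_def eq by (simp add: suminf_mult[OF sg])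
  also have "\<dots> = norm c * H2_norm g" unfolding H2_norm_def by (simp add: real_sqrt_mult)
  finally show "H2_norm (\<lambda>z. c * g z) = norm c * H2_norm g" .
qed

definition EE :: "complex \<Rightarrow> complex \<Rightarrow> real" where
  "EE p w = (1 - (norm w)^2 * (norm p)^2) / (norm (1 - cnj w * p))^2"

lemma H2_norm_nonneg: "in_H2 f \<Longrightarrow> 0 \<le> H2_norm f"
  unfolding H2_norm_def in_H2_def by (auto intro!: suminf_nonneg)

lemma ratio_eq:
  fixes \<phi> :: "complex \<Rightarrow> complex"
  assumes inn: "inner_function \<phi>" and w: "norm w < 1"
  shows "H2_norm (comp_op \<phi> (kernel w)) / H2_norm (kernel w) = sqrt (EE (\<phi> 0) w)"
    and "0 < H2_norm (kernel w)"
proof -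
  have w2: "(norm w)^2 < 1" using w by (simp add: power_less_one_iff abs_less_iff)
  have k1: "(H2_norm (comp_op \<phi> (kernel w)))^2 = (1 - (norm w)^2 * (norm (\<phi> 0))^2) / ((1 - (norm w)^2) * (norm (1 - cnj w * \<phi> 0))^2)"
    using kernel_comp(2)[OF inn w] by (simp add: comp_op_def o_def)
  have k2: "(H2_norm (kernel w))^2 = 1 / (1 - (norm w)^2)"
    using kernel_comp(2)[OF inner_id w] by simp
  have y0: "0 < (H2_norm (kernel w))^2" unfolding k2 using w2 by simp
  have i1: "in_H2 (kernel w)" using kernel_comp(1)[OF inner_id w] by simp
  have i2: "in_H2 (comp_op \<phi> (kernel w))" using kernel_comp(1)[OF inn w] by (simp add: comp_op_def o_def)
  show "0 < H2_norm (kernel w)" using y0 H2_norm_nonneg[OF i1] by (auto simp: less_le)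
  have ph: "\<phi> ` ball 0 1 \<subseteq> ball 0 1" using inn by (auto simp: inner_function_def)
  have "\<phi> 0 \<in> ball 0 1" using ph by (metis centre_in_ball image_subset_iff zero_less_one)
  then have "norm w * norm (\<phi> 0) \<le> norm w" by (intro mult_left_le) auto
  then have "norm (cnj w * \<phi> 0) < 1" using w by (simp add: norm_mult)
  then have nz: "1 - cnj w * \<phi> 0 \<noteq> 0" by auto
  have "H2_norm (comp_op \<phi> (kernel w)) / H2_norm (kernel w)
      = sqrt ((H2_norm (comp_op \<phi> (kernel w)))^2) / sqrt ((H2_norm (kernel w))^2)"
    by (simp add: H2_norm_nonneg i1 i2)
  also have "\<dots> = sqrt ((H2_norm (comp_op \<phi> (kernel w)))^2 / (H2_norm (kernel w))^2)"
    by (simp add: real_sqrt_divide)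
  also have "(H2_norm (comp_op \<phi> (kernel w)))^2 / (H2_norm (kernel w))^2 = EE (\<phi> 0) w"
    unfolding k1 k2 EE_def using w2 nz by (simp add: field_simps)
  finally show "H2_norm (comp_op \<phi> (kernel w)) / H2_norm (kernel w) = sqrt (EE (\<phi> 0) w)" .
qed


lemma sqrt_lim:
  fixes x :: "nat \<Rightarrow> real" assumes "x \<longlonglongrightarrow> 1" and q: "0 \<le> q" "q < 1"
  shows "(\<lambda>n. sqrt ((1 + x n * q) / (1 - x n * q))) \<longlonglongrightarrow> sqrt ((1 + q) / (1 - q))"
    and "(\<lambda>n. sqrt ((1 - x n * q) / (1 + x n * q))) \<longlonglongrightarrow> sqrt ((1 - q) / (1 + q))"
proof -
  have "(\<lambda>n. sqrt ((1 + x n * q) / (1 - x n * q))) \<longlonglongrightarrow> sqrt ((1 + 1 * q) / (1 - 1 * q))"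
    using q by (intro tendsto_intros assms(1)) auto
  then show "(\<lambda>n. sqrt ((1 + x n * q) / (1 - x n * q))) \<longlonglongrightarrow> sqrt ((1 + q) / (1 - q))" by simp
  have "(\<lambda>n. sqrt ((1 - x n * q) / (1 + x n * q))) \<longlonglongrightarrow> sqrt ((1 - 1 * q) / (1 + 1 * q))"
    using q by (intro tendsto_intros assms(1)) auto
  then show "(\<lambda>n. sqrt ((1 - x n * q) / (1 + x n * q))) \<longlonglongrightarrow> sqrt ((1 - q) / (1 + q))" by simp
qed

theorem mainTheorem4:
  fixes \<phi> :: "complex \<Rightarrow> complex" and p :: complex and r :: "nat \<Rightarrow> real"
  assumes "inner_function \<phi>"
    and "\<phi> 0 = p" and "p \<noteq> 0"
    and "\<And>n. 0 < r n \<and> r n < 1"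
    and "r \<longlonglongrightarrow> 1"
  defines "w \<equiv> (\<lambda>n. - (p / complex_of_real (norm p)) * complex_of_real (r n))"
  shows "((\<lambda>n. H2_norm (comp_op \<phi> (kernel (disc_aut p (w n)))) / H2_norm (kernel (disc_aut p (w n))))
            \<longlonglongrightarrow> sqrt ((1 + norm p) / (1 - norm p)) \<and>
           sqrt ((1 + norm p) / (1 - norm p)) = comp_op_norm \<phi> \<and>
           (\<lambda>n. H2_norm (comp_op \<phi> (kernel (w n))) / H2_norm (kernel (w n)))
            \<longlonglongrightarrow> sqrt ((1 - norm p) / (1 + norm p)))"
proof -
  note inn = assms(1)
  have rr: "0 < r n" "r n < 1" for n using assms(4) by auto
  have ph: "\<phi> ` ball 0 1 \<subseteq> ball 0 1" using inn by (auto simp: inner_function_def)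
  have "\<phi> 0 \<in> ball 0 1" using ph by (metis centre_in_ball image_subset_iff zero_less_one)
  then have p1: "norm p < 1" using assms(2) by simp
  have p0: "0 < norm p" using assms(3) by simp
  define q where "q = norm p"
  define u where "u = p / complex_of_real q"
  have nq: "complex_of_real q \<noteq> 0" using p0 unfolding q_def by simp
  have nu: "norm u = 1" unfolding u_def q_def using p0 by (simp add: norm_divide)
  have pu: "p = u * complex_of_real q" unfolding u_def using nq by simp
  have pp: "cnj p * p = complex_of_real (q^2)" unfolding q_def using complex_norm_square[of p] by (simp add: mult.commute)
  have cup: "cnj u * p = complex_of_real q"
  proof -
    have "cnj u * p = cnj p * p / complex_of_real q" unfolding u_def by simp
    also have "\<dots> = complex_of_real q" unfolding pp using nq by (simp add: power2_eq_square)
    finally show ?thesis .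
  qed
  have cpu: "cnj p * u = complex_of_real q"
  proof -
    have "cnj p * u = cnj (cnj u * p)" by simp
    then show ?thesis unfolding cup by simp
  qed
  have weq: "w n = - u * complex_of_real (r n)" for n unfolding w_def u_def q_def ..
  have nw: "norm (w n) = r n" for n using rr[of n] unfolding weq by (simp add: norm_mult nu)
  have cwp: "cnj (w n) * p = - complex_of_real (r n * q)" for n
  proof -
    have "cnj (w n) * p = - (cnj u * p) * complex_of_real (r n)" unfolding weq by simp
    then show ?thesis unfolding cup by simp
  qed
  have E1: "EE p (w n) = (1 - r n * q) / (1 + r n * q)" for n
  proof -
    have e: "1 - cnj (w n) * p = complex_of_real (1 + r n * q)" unfolding cwp by simp
    have a: "norm (1 - cnj (w n) * p) = 1 + r n * q"
      unfolding e norm_of_real using rr[of n] p0 unfolding q_def by simp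
    have "0 \<le> r n * q" using rr[of n] p0 unfolding q_def by simp
    then have b: "1 + r n * q \<noteq> 0" by linarith
    have f: "1 - (r n)^2 * q^2 = (1 - r n * q) * (1 + r n * q)" by (simp add: algebra_simps power2_eq_square)
    show ?thesis unfolding EE_def a nw q_def[symmetric] f power2_eq_square[of "1 + r n * q"]
      using b by simp
  qed
  define s where "s n = (q + r n) / (1 + q * r n)" for n
  have spos: "0 < 1 + q * r n" for n using rr[of n] p0 unfolding q_def by (simp add: add_pos_pos)
  have s01: "0 < s n" "s n < 1" for n
  proof -
    have "0 < q + r n" using rr[of n] p0 unfolding q_def by linarith
    then show "0 < s n" unfolding s_def using spos[of n] by simp
    have "q + r n < 1 + q * r n"
    proof -
      have "0 < (1 - q) * (1 - r n)" using rr[of n] p1 unfolding q_def by simp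
      then show ?thesis by (simp add: algebra_simps)
    qed
    then show "s n < 1" unfolding s_def using spos[of n] by simp
  qed
  define v where "v n = disc_aut p (w n)" for n
  have veq: "v n = u * complex_of_real (s n)" for n
  proof -
    have num: "p - w n = u * complex_of_real (q + r n)" unfolding weq pu by (simp add: algebra_simps)
    have den: "1 - cnj p * w n = complex_of_real (1 + q * r n)"
    proof -
      have "cnj p * w n = - (cnj p * u) * complex_of_real (r n)" unfolding weq by simp
      then show ?thesis unfolding cpu by simp
    qed
    have "v n = u * complex_of_real (q + r n) / complex_of_real (1 + q * r n)"
      unfolding v_def disc_aut_def num den ..
    then show ?thesis unfolding s_def by simp
  qed
  have nv: "norm (v n) = s n" for n unfolding veq using s01[of n] by (simp add: norm_mult nu)
  have cvp: "cnj (v n) * p = complex_of_real (s n * q)" for n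
  proof -
    have "cnj (v n) * p = (cnj u * p) * complex_of_real (s n)" unfolding veq by simp
    then show ?thesis unfolding cup by simp
  qed
  have E2: "EE p (v n) = (1 + s n * q) / (1 - s n * q)" for n
  proof -
    have sq1: "s n * q < 1 * 1" using s01[of n] p1 p0 unfolding q_def by (intro mult_strict_mono) auto
    have e: "1 - cnj (v n) * p = complex_of_real (1 - s n * q)" unfolding cvp by simp
    have a: "norm (1 - cnj (v n) * p) = 1 - s n * q"
      unfolding e norm_of_real using sq1 by simp
    have b: "1 - s n * q \<noteq> 0" using sq1 by simp
    have f: "1 - (s n)^2 * q^2 = (1 + s n * q) * (1 - s n * q)" by (simp add: algebra_simps power2_eq_square)
    show ?thesis unfolding EE_def a nv q_def[symmetric] f power2_eq_square[of "1 - s n * q"]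
      using b by simp
  qed
  have slim: "s \<longlonglongrightarrow> 1"
  proof -
    have qq: "1 + q * 1 \<noteq> 0" using p0 unfolding q_def by linarith
    have "(\<lambda>n. (q + r n) / (1 + q * r n)) \<longlonglongrightarrow> (q + 1) / (1 + q * 1)"
      by (intro tendsto_intros assms(5) qq)
    then show ?thesis unfolding s_def[abs_def] using qq by (simp add: add.commute)
  qed
  have vin: "norm (v n) < 1" for n using nv s01 by simp
  have win: "norm (w n) < 1" for n using nw rr by simp
  have R1: "H2_norm (comp_op \<phi> (kernel (v n))) / H2_norm (kernel (v n)) = sqrt ((1 + s n * q) / (1 - s n * q))" for n
    using ratio_eq(1)[OF inn vin[of n]] unfolding assms(2) E2 .
  have R3: "H2_norm (comp_op \<phi> (kernel (w n))) / H2_norm (kernel (w n)) = sqrt ((1 - r n * q) / (1 + r n * q))" for n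
    using ratio_eq(1)[OF inn win[of n]] unfolding assms(2) E1 .
  have q01: "0 \<le> q" "q < 1" using p0 p1 unfolding q_def by auto
  have L1: "(\<lambda>n. H2_norm (comp_op \<phi> (kernel (v n))) / H2_norm (kernel (v n))) \<longlonglongrightarrow> sqrt ((1 + q) / (1 - q))"
    unfolding R1 by (rule sqrt_lim(1)[OF slim q01])
  have L3: "(\<lambda>n. H2_norm (comp_op \<phi> (kernel (w n))) / H2_norm (kernel (w n))) \<longlonglongrightarrow> sqrt ((1 - q) / (1 + q))"
    unfolding R3 by (rule sqrt_lim(2)[OF assms(5) q01])
  define C where "C = (1 + q) / (1 - q)"
  have C0: "0 \<le> C" unfolding C_def using q01 by simp
  define S where "S = {H2_norm (comp_op \<phi> f) | f. in_H2 f \<and> H2_norm f \<le> 1}"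
  have ub: "x \<le> sqrt C" if xS: "x \<in> S" for x
  proof -
    obtain f where f: "x = H2_norm (comp_op \<phi> f)" "in_H2 f" "H2_norm f \<le> 1" using xS unfolding S_def by auto
    have f0: "0 \<le> H2_norm f" by (rule H2_norm_nonneg[OF f(2)])
    have "(H2_norm f)^2 \<le> 1" using f(3) f0 by (simp add: power_le_one)
    then have "C * (H2_norm f)^2 \<le> C" using C0 by (simp add: mult_left_le)
    moreover have "x^2 \<le> C * (H2_norm f)^2"
      using comp_bound[OF inn f(2)] unfolding f(1) C_def q_def assms(2) by (simp add: mult.commute)
    ultimately have "x^2 \<le> C" by simp
    then have "sqrt (x^2) \<le> sqrt C" by (rule real_sqrt_le_mono)
    then show ?thesis by simp
  qed
  have mem: "H2_norm (comp_op \<phi> (kernel (v n))) / H2_norm (kernel (v n)) \<in> S" for n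
  proof -
    have k1: "in_H2 (kernel (v n))" using kernel_comp(1)[OF inner_id vin[of n]] by simp
    have k2: "in_H2 (comp_op \<phi> (kernel (v n)))" using kernel_comp(1)[OF inn vin[of n]] by (simp add: comp_op_def o_def)
    have kp: "0 < H2_norm (kernel (v n))" by (rule ratio_eq(2)[OF inn vin[of n]])
    define c where "c = complex_of_real (1 / H2_norm (kernel (v n)))"
    have nc: "norm c = 1 / H2_norm (kernel (v n))" unfolding c_def norm_of_real using kp by simp
    define h where "h z = c * kernel (v n) z" for z
    have h1: "in_H2 h" unfolding h_def by (rule H2_scale(1)[OF k1])
    have h2: "H2_norm h = 1" unfolding h_def H2_scale(2)[OF k1] nc using kp by simp
    have ch: "comp_op \<phi> h = (\<lambda>z. c * comp_op \<phi> (kernel (v n)) z)" unfolding h_def comp_op_def by auto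
    have "H2_norm (comp_op \<phi> h) = H2_norm (comp_op \<phi> (kernel (v n))) / H2_norm (kernel (v n))"
      unfolding ch H2_scale(2)[OF k2] nc by simp
    then show ?thesis unfolding S_def using h1 h2 by force
  qed
  have bdd: "bdd_above S" unfolding bdd_above_def using ub by blast
  have ne: "S \<noteq> {}" using mem by blast
  have sup1: "Sup S \<le> sqrt C" by (rule cSup_least[OF ne ub])
  have sup2: "sqrt C \<le> Sup S"
    using L1 unfolding C_def
    by (rule LIMSEQ_le_const2) (use cSup_upper[OF mem bdd] in auto)
  have "comp_op_norm \<phi> = Sup S" unfolding comp_op_norm_def S_def ..
  then have L2: "sqrt C = comp_op_norm \<phi>" using sup1 sup2 by simp
  show ?thesis using L1 L2 L3 unfolding v_def C_def q_def by simp
qed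

end
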